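(* There is an absolute constant $C>0$ such that the following holds. Let $P=P_0\setminus\bigcup_{i=1}^h\operatorname{int}(P_i)$, where $P_0$ is a convex polygon and $P_1,\dots,P_h$ are pairwise disjoint $\lambda$-fat convex polygons in the interior of $P_0$, for some $\lambda\in(0,1]$. Then for all $s,t\in P$, ${\rm geod}(s,t)\le C\lambda^{-1}|st|$.
   Context: The width of a convex body $K$ is the minimum width of a parallel slab containing $K$; $K$ is $\lambda$-fat if ${\rm width}(K)/{\rm diam}_2(K)\ge\lambda$. ${\rm geod}(s,t)$ is the infimum of Euclidean lengths of polygonal paths from $s$ to $t$ contained in $P$. *)

theory Defs
  imports "HOL-Analysis.Analysis" "HOL-Library.Extended_Real"
begin

definition convex_polygon :: "(real^2) set \<Rightarrow> bool" where
  "convex_polygon K \<longleftrightarrow> polytope K \<and> interior K \<noteq> {}"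

definition width :: "(real^2) set \<Rightarrow> real" where
  "width K = (INF u\<in>sphere (0::real^2) 1. (SUP x\<in>K. u \<bullet> x) - (INF x\<in>K. u \<bullet> x))"

definition fat :: "real \<Rightarrow> (real^2) set \<Rightarrow> bool" where
  "fat lam K \<longleftrightarrow> width K / diameter K \<ge> lam"

definition polygonal_path_in :: "(real^2) set \<Rightarrow> (real^2) list \<Rightarrow> bool" where
  "polygonal_path_in P ps \<longleftrightarrow> ps \<noteq> [] \<and>
     (\<forall>i. Suc i < length ps \<longrightarrow> closed_segment (ps ! i) (ps ! Suc i) \<subseteq> P)
     \<and> (length ps = 1 \<longrightarrow> hd ps \<in> P)"

definition poly_length :: "(real^2) list \<Rightarrow> real" where
  "poly_length ps = (\<Sum>i<length ps - 1. dist (ps ! i) (ps ! Suc i))"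

text \<open>Geodesic distance in P (value \<infinity> if no polygonal path exists).\<close>
definition geod :: "(real^2) set \<Rightarrow> real^2 \<Rightarrow> real^2 \<Rightarrow> ereal" where
  "geod P s t = (INF ps\<in>{ps. polygonal_path_in P ps \<and> hd ps = s \<and> last ps = t}.
                   ereal (poly_length ps))"

end

theory Submission
  imports Defs
begin


fun segs :: "(real^2) set \<Rightarrow> (real^2) list \<Rightarrow> bool" where
  "segs S (x # y # r) = (closed_segment x y \<subseteq> S \<and> segs S (y # r))"
| "segs S _ = True"

fun plen :: "(real^2) list \<Rightarrow> real" where
  "plen (x # y # r) = dist x y + plen (y # r)"
| "plen _ = 0"

lemma segs_iff: "segs S ps \<longleftrightarrow> (\<forall>i. Suc i < length ps \<longrightarrow> closed_segment (ps!i) (ps!Suc i) \<subseteq> S)"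
proof (induction S ps rule: segs.induct)
  case (1 S x y r)
  show ?case
  proof
    assume H: "segs S (x # y # r)"
    show "\<forall>i. Suc i < length (x # y # r) \<longrightarrow> closed_segment ((x # y # r) ! i) ((x # y # r) ! Suc i) \<subseteq> S"
    proof (intro allI impI)
      fix i assume "Suc i < length (x # y # r)"
      then show "closed_segment ((x # y # r) ! i) ((x # y # r) ! Suc i) \<subseteq> S"
        using H 1 by (cases i) auto
    qed
  next
    assume H: "\<forall>i. Suc i < length (x # y # r) \<longrightarrow> closed_segment ((x # y # r) ! i) ((x # y # r) ! Suc i) \<subseteq> S"
    have "closed_segment x y \<subseteq> S" using H[rule_format, of 0] by simp
    moreover have "segs S (y # r)" using 1 H by (metis Suc_less_eq length_Cons nth_Cons_Suc)
    ultimately show "segs S (x # y # r)" by simp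
  qed
qed auto

lemma plen_eq: "poly_length ps = plen ps"
proof (induction ps rule: plen.induct)
  case (1 x y r)
  have "poly_length (x # y # r) = (\<Sum>i<Suc (length r). dist ((x # y # r) ! i) ((x # y # r) ! Suc i))"
    by (simp add: poly_length_def)
  also have "\<dots> = dist x y + (\<Sum>i<length r. dist ((y # r) ! i) ((y # r) ! Suc i))"
    by (subst sum.lessThan_Suc_shift) simp
  also have "\<dots> = dist x y + poly_length (y # r)" by (simp add: poly_length_def)
  finally show ?case using 1 by simp
qed (auto simp: poly_length_def)

lemma plen_nonneg: "plen ps \<ge> 0"
  by (induction ps rule: plen.induct) auto

lemma dist_le_plen: "ps \<noteq> [] \<Longrightarrow> dist (hd ps) (last ps) \<le> plen ps"
proof (induction ps rule: plen.induct)
  case (1 x y r)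
  then show ?case using dist_triangle[of x "last (y#r)" y] by auto
qed auto

lemma segs_mono: "segs S ps \<Longrightarrow> S \<subseteq> T \<Longrightarrow> segs T ps"
  by (induction S ps rule: segs.induct) auto

lemma segs_app: "ps \<noteq> [] \<Longrightarrow> qs \<noteq> [] \<Longrightarrow> last ps = hd qs \<Longrightarrow> segs S ps \<Longrightarrow> segs S qs
   \<Longrightarrow> segs S (ps @ tl qs) \<and> plen (ps @ tl qs) = plen ps + plen qs"
proof (induction ps)
  case (Cons x r)
  show ?case
  proof (cases r)
    case Nil
    then show ?thesis using Cons by (cases qs) auto
  next
    case (Cons y r')
    then show ?thesis using Cons.IH Cons.prems by auto
  qed
qed auto

lemma segs_in_hd: "segs S ps \<Longrightarrow> length ps \<ge> 2 \<Longrightarrow> hd ps \<in> S"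
  by (cases ps rule: plen.cases) auto

lemma path_in: "ps \<noteq> [] \<Longrightarrow> segs P ps \<Longrightarrow> hd ps \<in> P \<Longrightarrow> polygonal_path_in P ps"
  unfolding polygonal_path_in_def segs_iff[symmetric] by auto

lemma geod_le: "ps \<noteq> [] \<Longrightarrow> segs P ps \<Longrightarrow> hd ps = s \<Longrightarrow> s \<in> P \<Longrightarrow> last ps = t
   \<Longrightarrow> plen ps \<le> B \<Longrightarrow> geod P s t \<le> ereal B"
  unfolding geod_def
  apply (rule INF_lower2[of ps])
  using path_in plen_eq by auto




lemma seg_dist: "x \<in> closed_segment a b \<Longrightarrow> dist a x + dist x b = dist (a::real^2) b"
  using between[of a b x] between_mem_segment[of a b x] by simp

lemma crossing:
  fixes p q g :: "real^2"
  assumes "g \<bullet> p \<le> \<beta>" "\<not> g \<bullet> q \<le> \<beta>"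
  shows "\<exists>c\<in>closed_segment p q. g \<bullet> c = \<beta>"
proof -
  define t where "t = (\<beta> - g \<bullet> p) / (g \<bullet> q - g \<bullet> p)"
  have t01: "0 \<le> t" "t \<le> 1" using assms by (auto simp: t_def field_simps)
  define c where "c = (1 - t) *\<^sub>R p + t *\<^sub>R q"
  have "c \<in> closed_segment p q" using t01 unfolding c_def closed_segment_def by auto
  moreover have "g \<bullet> c = g \<bullet> p + t * (g \<bullet> q - g \<bullet> p)"
    by (simp add: c_def inner_simps algebra_simps)
  then have "g \<bullet> c = \<beta>" using assms by (simp add: t_def)
  ultimately show ?thesis by blast
qed

lemma hd_in_H:
  assumes "segs (S \<inter> H) xs" "xs \<noteq> []" "last xs \<in> H"
  shows "hd xs \<in> H"
proof (cases "length xs \<ge> 2")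
  case True then show ?thesis using segs_in_hd[OF assms(1)] by auto
next
  case False then obtain x where "xs = [x]" using assms(2) by (cases xs; cases "tl xs") auto
  then show ?thesis using assms(3) by auto
qed

context
  fixes g :: "real^2" and \<beta> :: real and S :: "(real^2) set"
  assumes SP: "\<And>c d. c \<in> S \<Longrightarrow> d \<in> S \<Longrightarrow> g \<bullet> c = \<beta> \<Longrightarrow> g \<bullet> d = \<beta> \<Longrightarrow> closed_segment c d \<subseteq> S"
begin

lemma back_lemma:
  "xs \<noteq> [] \<Longrightarrow> last xs \<in> {x. g \<bullet> x \<le> \<beta>} \<Longrightarrow> segs S xs \<Longrightarrow>
    segs (S \<inter> {x. g \<bullet> x \<le> \<beta>}) xs \<or>
    (\<exists>d zs. d \<in> S \<and> g \<bullet> d = \<beta> \<and> segs (S \<inter> {x. g \<bullet> x \<le> \<beta>}) (d # zs) \<and> last (d # zs) = last xs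
        \<and> dist (hd xs) d + plen (d # zs) \<le> plen xs)"
proof (induction xs rule: plen.induct)
  case (1 q r rest)
  let ?H = "{x. g \<bullet> x \<le> \<beta>}"
  have segqr: "closed_segment q r \<subseteq> S" and sr: "segs S (r # rest)" using "1.prems" by auto
  have IH: "segs (S \<inter> ?H) (r # rest) \<or>
    (\<exists>d zs. d \<in> S \<and> g \<bullet> d = \<beta> \<and> segs (S \<inter> ?H) (d # zs) \<and> last (d # zs) = last (r # rest)
        \<and> dist r d + plen (d # zs) \<le> plen (r # rest))"
    using "1.IH" "1.prems" sr by auto
  show ?case
  proof (cases "segs (S \<inter> ?H) (r # rest)")
    case True
    have rH: "r \<in> ?H" using hd_in_H[OF True] "1.prems" by auto
    show ?thesis
    proof (cases "q \<in> ?H")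
      case True
      have "closed_segment q r \<subseteq> ?H"
        using True rH by (intro closed_segment_subset convex_halfspace_le) auto
      then show ?thesis using segqr \<open>segs (S \<inter> ?H) (r # rest)\<close> by auto
    next
      case False
      obtain d where d: "d \<in> closed_segment r q" "g \<bullet> d = \<beta>"
        using crossing[of g r \<beta> q] rH False by auto
      have dS: "d \<in> S" using d segqr by (auto simp: closed_segment_commute)
      have sub: "closed_segment d r \<subseteq> S \<inter> ?H"
      proof -
        have "closed_segment d r \<subseteq> closed_segment q r"
          using d by (intro closed_segment_subset) (auto simp: closed_segment_commute)
        moreover have "closed_segment d r \<subseteq> ?H"
          using d rH by (intro closed_segment_subset convex_halfspace_le) auto
        ultimately show ?thesis using segqr by auto
      qed
      have "dist q d + dist d r = dist q r"
        using seg_dist[of d r q] d by (simp add: dist_commute add.commute)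
      then show ?thesis
        using dS d sub \<open>segs (S \<inter> ?H) (r # rest)\<close>
        by (intro disjI2 exI[of _ d] exI[of _ "r # rest"]) auto
    qed
  next
    case False
    then obtain d zs where dz: "d \<in> S" "g \<bullet> d = \<beta>" "segs (S \<inter> ?H) (d # zs)" "last (d # zs) = last (r # rest)"
        "dist r d + plen (d # zs) \<le> plen (r # rest)" using IH by blast
    have "dist q d \<le> dist q r + dist r d" by (rule dist_triangle)
    then show ?thesis using dz by (intro disjI2 exI[of _ d] exI[of _ zs]) auto
  qed
qed auto

lemma cut_lemma:
  "ps \<noteq> [] \<Longrightarrow> hd ps \<in> {x. g \<bullet> x \<le> \<beta>} \<Longrightarrow> last ps \<in> {x. g \<bullet> x \<le> \<beta>} \<Longrightarrow> segs S ps \<Longrightarrow>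
    \<exists>qs. qs \<noteq> [] \<and> hd qs = hd ps \<and> last qs = last ps \<and> segs (S \<inter> {x. g \<bullet> x \<le> \<beta>}) qs \<and> plen qs \<le> plen ps"
proof (induction ps rule: plen.induct)
  case (1 p q rest)
  let ?H = "{x. g \<bullet> x \<le> \<beta>}"
  have segpq: "closed_segment p q \<subseteq> S" and sq: "segs S (q # rest)" using "1.prems" by auto
  show ?case
  proof (cases "q \<in> ?H")
    case True
    obtain qs where qs: "qs \<noteq> []" "hd qs = q" "last qs = last (q # rest)" "segs (S \<inter> ?H) qs" "plen qs \<le> plen (q # rest)"
      using "1.IH" True "1.prems" sq by auto
    have "closed_segment p q \<subseteq> ?H"
      using True "1.prems"(2) by (intro closed_segment_subset convex_halfspace_le) auto
    then have "segs (S \<inter> ?H) (p # qs)" using qs segpq by (cases qs) auto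
    moreover have "plen (p # qs) = dist p q + plen qs" using qs by (cases qs) auto
    ultimately show ?thesis using qs by (intro exI[of _ "p # qs"]) auto
  next
    case False
    have pH: "p \<in> ?H" using "1.prems" by auto
    obtain c where c: "c \<in> closed_segment p q" "g \<bullet> c = \<beta>"
      using crossing[of g p \<beta> q] pH False by auto
    have B: "segs (S \<inter> ?H) (q # rest) \<or>
      (\<exists>d zs. d \<in> S \<and> g \<bullet> d = \<beta> \<and> segs (S \<inter> ?H) (d # zs) \<and> last (d # zs) = last (q # rest)
        \<and> dist q d + plen (d # zs) \<le> plen (q # rest))"
      using back_lemma[of "q # rest"] "1.prems" sq by auto
    have "\<not> segs (S \<inter> ?H) (q # rest)"
      using hd_in_H[of S ?H "q # rest"] False "1.prems" by auto
    then obtain d zs where dz: "d \<in> S" "g \<bullet> d = \<beta>" "segs (S \<inter> ?H) (d # zs)" "last (d # zs) = last (q # rest)"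
        "dist q d + plen (d # zs) \<le> plen (q # rest)" using B by blast
    have cS: "c \<in> S" using c segpq by auto
    have s1: "closed_segment p c \<subseteq> S \<inter> ?H"
    proof -
      have "closed_segment p c \<subseteq> closed_segment p q"
        using c by (intro closed_segment_subset) auto
      moreover have "closed_segment p c \<subseteq> ?H"
        using c pH by (intro closed_segment_subset convex_halfspace_le) auto
      ultimately show ?thesis using segpq by auto
    qed
    have s2: "closed_segment c d \<subseteq> S \<inter> ?H"
    proof -
      have "closed_segment c d \<subseteq> ?H"
        using c dz by (intro closed_segment_subset convex_halfspace_le) auto
      then show ?thesis using SP[OF cS dz(1) c(2) dz(2)] by auto
    qed
    have "dist p c + dist c q = dist p q" using seg_dist[OF c(1)] .
    moreover have "dist c d \<le> dist c q + dist q d" by (rule dist_triangle)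
    ultimately have "dist p c + dist c d + plen (d # zs) \<le> dist p q + plen (q # rest)"
      using dz(5) by linarith
    then show ?thesis using s1 s2 dz
      by (intro exI[of _ "p # c # d # zs"]) auto
  qed
qed auto

end




lemma shorten:
  fixes K :: "(real^2) set"
  assumes poly: "polyhedron K" and ps: "ps \<noteq> []" "hd ps \<in> K" "last ps \<in> K" "segs (- interior K) ps"
  shows "\<exists>qs. qs \<noteq> [] \<and> hd qs = hd ps \<and> last qs = last ps \<and> segs (K - interior K) qs \<and> plen qs \<le> plen ps"
proof -
  obtain F where F: "finite F" "K = \<Inter>F" "\<And>h. h \<in> F \<Longrightarrow> \<exists>a b. a \<noteq> 0 \<and> h = {x. a \<bullet> x \<le> b}"
    using poly unfolding polyhedron_def by blast
  have main: "G \<subseteq> F \<Longrightarrow> \<exists>qs. qs \<noteq> [] \<and> hd qs = hd ps \<and> last qs = last ps \<and> segs (\<Inter>G - interior K) qs \<and> plen qs \<le> plen ps"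
    if "finite G" for G
    using that
  proof (induction G rule: finite_induct)
    case empty
    then show ?case using ps by (intro exI[of _ ps]) (auto simp: Compl_eq_Diff_UNIV)
  next
    case (insert h G)
    obtain qs where qs: "qs \<noteq> []" "hd qs = hd ps" "last qs = last ps" "segs (\<Inter>G - interior K) qs" "plen qs \<le> plen ps"
      using insert by auto
    obtain a b where ab: "a \<noteq> 0" "h = {x. a \<bullet> x \<le> b}" using F(3) insert.prems by blast
    have Kh: "K \<subseteq> h" using F(2) insert.prems by auto
    have intK: "interior K \<subseteq> {x. a \<bullet> x < b}"
      using interior_mono[OF Kh] ab by simp
    have convG: "convex (\<Inter>G)"
      using F(3) insert.prems by (intro convex_Inter) (auto intro: convex_halfspace_le)
    have SP: "closed_segment c d \<subseteq> \<Inter>G - interior K"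
      if "c \<in> \<Inter>G - interior K" "d \<in> \<Inter>G - interior K" "a \<bullet> c = b" "a \<bullet> d = b" for c d
    proof -
      have "closed_segment c d \<subseteq> \<Inter>G" using that convG by (intro closed_segment_subset) auto
      moreover have "closed_segment c d \<subseteq> {x. a \<bullet> x = b}"
        using that by (intro closed_segment_subset convex_hyperplane) auto
      ultimately show ?thesis using intK by auto
    qed
    have hdH: "hd qs \<in> {x. a \<bullet> x \<le> b}" and lastH: "last qs \<in> {x. a \<bullet> x \<le> b}"
      using qs(2,3) ps(2,3) Kh ab(2) by auto
    obtain rs where rs: "rs \<noteq> []" "hd rs = hd qs" "last rs = last qs"
        "segs ((\<Inter>G - interior K) \<inter> {x. a \<bullet> x \<le> b}) rs" "plen rs \<le> plen qs"
      using cut_lemma[where g=a and \<beta>=b and S="\<Inter>G - interior K" and ps=qs, OF SP qs(1) hdH lastH qs(4)]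
      by blast
    have "segs (\<Inter>(insert h G) - interior K) rs"
      by (rule segs_mono[OF rs(4)]) (use ab in auto)
    then show ?case using rs qs by (intro exI[of _ rs]) auto
  qed
  show ?thesis using main[OF F(1)] F(2) by auto
qed




lemma inner2: "(x::real^2) \<bullet> y = x$1*y$1 + x$2*y$2"
  by (simp add: inner_vec_def sum_2)

definition cr :: "real^2 \<Rightarrow> real^2 \<Rightarrow> real" where
  "cr x y = x$1*y$2 - x$2*y$1"

lemma I3: "(n \<bullet> n) * (u \<bullet> v) = (n \<bullet> u) * (n \<bullet> v) + cr n u * cr n v"
  unfolding inner2 cr_def by (simp add: algebra_simps)

lemma I4: "(n \<bullet> n) * cr w u = (n \<bullet> w) * cr n u - cr n w * (n \<bullet> u)"
  unfolding inner2 cr_def by (simp add: algebra_simps)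

lemma cr_anti: "cr x y = - cr y x"
  unfolding cr_def by (simp add: algebra_simps)

lemma lagrange: "n \<bullet> n = 1 \<Longrightarrow> (n \<bullet> u)^2 + (cr n u)^2 = (norm u)^2"
proof -
  assume "n \<bullet> n = 1"
  then have "u \<bullet> u = (n \<bullet> u)^2 + (cr n u)^2" using I3[of n u u] by (simp add: power2_eq_square)
  then show ?thesis by (simp add: power2_norm_eq_inner)
qed

lemma cr_le_norm: "n \<bullet> n = 1 \<Longrightarrow> \<bar>cr n u\<bar> \<le> norm u"
proof -
  assume "n \<bullet> n = 1"
  then have "(cr n u)^2 \<le> (norm u)^2" using lagrange[of n u] zero_le_power2[of "n \<bullet> u"] by linarith
  then have "\<bar>cr n u\<bar> \<le> \<bar>norm u\<bar>" using abs_le_square_iff[of "cr n u" "norm u"] by blast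
  then show ?thesis by simp
qed

lemma inner_le_norm_unit: "n \<bullet> n = 1 \<Longrightarrow> \<bar>n \<bullet> u\<bar> \<le> norm u"
proof -
  assume "n \<bullet> n = 1"
  then have "norm n = 1" by (simp add: norm_eq_sqrt_inner)
  then show ?thesis using Cauchy_Schwarz_ineq2[of n u] by simp
qed

lemma NI:
  fixes K :: "(real^2) set"
  assumes "v \<noteq> 0" "\<forall>y\<in>K. v \<bullet> y \<le> m" "v \<bullet> p = m" "v \<bullet> q = m"
  shows "closed_segment p q \<subseteq> - interior K"
proof -
  have "interior K \<subseteq> {x. v \<bullet> x < m}"
    using interior_mono[of K "{x. v \<bullet> x \<le> m}"] assms(1,2) by auto
  moreover have "closed_segment p q \<subseteq> {x. v \<bullet> x = m}"
    using assms(3,4) by (intro closed_segment_subset convex_hyperplane) auto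
  ultimately show ?thesis by auto
qed

lemma SUPP:
  fixes K :: "(real^2) set"
  assumes "convex K" "closed K" "interior K \<noteq> {}" "x \<in> frontier K"
  shows "\<exists>n. n \<bullet> n = 1 \<and> (\<forall>y\<in>K. n \<bullet> y \<le> n \<bullet> x)"
proof -
  have ri: "rel_interior K = interior K" using rel_interior_nonempty_interior[OF assms(3)] .
  have x: "x \<in> closure K" "x \<notin> rel_interior K"
    using assms(4) unfolding ri frontier_def by blast+
  obtain a where a: "a \<noteq> 0" "\<And>y. y \<in> closure K \<Longrightarrow> a \<bullet> x \<le> a \<bullet> y"
    and "\<And>y. y \<in> rel_interior K \<Longrightarrow> a \<bullet> x < a \<bullet> y"
    by (rule supporting_hyperplane_relative_frontier[OF assms(1) x]) blast
  define n where "n = - (1 / norm a) *\<^sub>R a"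
  have "n \<bullet> n = (1 / norm a)^2 * (a \<bullet> a)" by (simp add: n_def power2_eq_square)
  also have "\<dots> = (1 / norm a)^2 * (norm a)^2" by (simp add: power2_norm_eq_inner)
  also have "\<dots> = 1" using a(1) by (simp add: field_simps)
  finally have "n \<bullet> n = 1" .
  moreover have "n \<bullet> y \<le> n \<bullet> x" if "y \<in> K" for y
  proof -
    have "a \<bullet> x \<le> a \<bullet> y" using a(2) that closure_subset by auto
    then have "- (1 / norm a) * (a \<bullet> y) \<le> - (1 / norm a) * (a \<bullet> x)"
      by (intro mult_left_mono_neg) auto
    then show ?thesis by (simp add: n_def)
  qed
  ultimately show ?thesis by blast
qed

lemma WB:
  fixes K :: "(real^2) set"
  assumes "bounded K" "K \<noteq> {}" "n \<bullet> n = 1" "\<forall>y\<in>K. n \<bullet> y \<le> M" "\<forall>y\<in>K. m0 \<le> n \<bullet> y"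
  shows "width K \<le> M - m0"
proof -
  obtain B where B: "\<forall>y\<in>K. norm y \<le> B" using assms(1) bounded_iff by blast
  have bddA: "bdd_above ((\<lambda>x. u \<bullet> x) ` K)" if "norm u = 1" for u
  proof -
    have "u \<bullet> y \<le> B" if "y \<in> K" for y
      using Cauchy_Schwarz_ineq2[of u y] B that \<open>norm u = 1\<close> by auto
    then show ?thesis by (rule bdd_aboveI2)
  qed
  have bddB: "bdd_below ((\<lambda>x. u \<bullet> x) ` K)" if "norm u = 1" for u
  proof -
    have "- B \<le> u \<bullet> y" if "y \<in> K" for y
      using Cauchy_Schwarz_ineq2[of u y] B that \<open>norm u = 1\<close> by auto
    then show ?thesis by (rule bdd_belowI2)
  qed
  obtain y0 where y0: "y0 \<in> K" using assms(2) by blast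
  have nonneg: "0 \<le> (SUP x\<in>K. u \<bullet> x) - (INF x\<in>K. u \<bullet> x)" if "norm u = 1" for u
  proof -
    have "(INF x\<in>K. u \<bullet> x) \<le> u \<bullet> y0" using cINF_lower[OF bddB[OF that] y0] .
    moreover have "u \<bullet> y0 \<le> (SUP x\<in>K. u \<bullet> x)" using cSUP_upper[OF y0 bddA[OF that]] .
    ultimately show ?thesis by linarith
  qed
  have nn: "norm n = 1" using assms(3) by (simp add: norm_eq_sqrt_inner)
  have "width K \<le> (SUP x\<in>K. n \<bullet> x) - (INF x\<in>K. n \<bullet> x)"
    unfolding width_def
    apply (rule cINF_lower)
    using nonneg by (auto intro!: bdd_belowI[where m=0] simp: nn)
  also have "\<dots> \<le> M - m0"
  proof -
    have "(SUP x\<in>K. n \<bullet> x) \<le> M" using assms(2,4) by (intro cSUP_least) auto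
    moreover have "m0 \<le> (INF x\<in>K. n \<bullet> x)" using assms(2,5) by (intro cINF_greatest) auto
    ultimately show ?thesis by linarith
  qed
  finally show ?thesis .
qed




lemma apex_lemma:
  fixes K :: "(real^2) set"
  assumes n1: "n1 \<bullet> n1 = 1" "\<forall>y\<in>K. n1 \<bullet> y \<le> n1 \<bullet> a"
    and n2: "n2 \<bullet> n2 = 1" "\<forall>y\<in>K. n2 \<bullet> y \<le> n2 \<bullet> b"
    and ab: "a \<in> K" "b \<in> K" and c0: "cr n1 n2 \<noteq> 0"
  shows "\<exists>ps. ps \<noteq> [] \<and> hd ps = a \<and> last ps = b \<and> segs (- interior K) ps \<and>
     \<bar>cr n1 n2\<bar> * plen ps \<le> 2 * dist a b \<and> (n1 \<bullet> n2 \<ge> 0 \<longrightarrow> plen ps \<le> 2 * dist a b)"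
proof -
  define c where "c = cr n1 n2"
  define e where "e = n1 \<bullet> n2"
  define \<alpha> where "\<alpha> = n1 \<bullet> a"
  define \<beta> where "\<beta> = n2 \<bullet> b"
  define A :: "real^2" where "A = vector [(\<alpha>*n2$2 - \<beta>*n1$2)/c, (\<beta>*n1$1 - \<alpha>*n2$1)/c]"
  have cne: "c \<noteq> 0" using c0 by (simp add: c_def)
  have A1: "n1 \<bullet> A = \<alpha>"
  proof -
    have "n1 \<bullet> A = (n1$1*(\<alpha>*n2$2 - \<beta>*n1$2) + n1$2*(\<beta>*n1$1 - \<alpha>*n2$1))/c"
      unfolding A_def inner2 by (simp add: field_simps cne)
    also have "\<dots> = \<alpha> * c / c" by (simp add: c_def cr_def algebra_simps)
    finally show ?thesis using cne by simp
  qed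
  have A2: "n2 \<bullet> A = \<beta>"
  proof -
    have "n2 \<bullet> A = (n2$1*(\<alpha>*n2$2 - \<beta>*n1$2) + n2$2*(\<beta>*n1$1 - \<alpha>*n2$1))/c"
      unfolding A_def inner2 by (simp add: field_simps cne)
    also have "\<dots> = \<beta> * c / c" by (simp add: c_def cr_def algebra_simps)
    finally show ?thesis using cne by simp
  qed
  define u where "u = A - a"
  define v where "v = A - b"
  have u0: "n1 \<bullet> u = 0" using A1 by (simp add: u_def inner_diff_right \<alpha>_def)
  have v0: "n2 \<bullet> v = 0" using A2 by (simp add: v_def inner_diff_right \<beta>_def)
  have n2u: "n2 \<bullet> u = c * cr n1 u"
    using I3[of n1 n2 u] n1(1) u0 by (simp add: c_def)
  have n1v: "n1 \<bullet> v = - c * cr n2 v"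
    using I3[of n2 n1 v] n2(1) v0 cr_anti[of n2 n1] by (simp add: c_def)
  have nu: "norm u = \<bar>cr n1 u\<bar>"
  proof -
    have eq: "(norm u)^2 = (cr n1 u)^2" using lagrange[OF n1(1), of u] u0 by simp
    have "sqrt ((norm u)^2) = sqrt ((cr n1 u)^2)" by (simp only: eq)
    then show ?thesis by simp
  qed
  have nv: "norm v = \<bar>cr n2 v\<bar>"
  proof -
    have eq: "(norm v)^2 = (cr n2 v)^2" using lagrange[OF n2(1), of v] v0 by simp
    have "sqrt ((norm v)^2) = sqrt ((cr n2 v)^2)" by (simp only: eq)
    then show ?thesis by simp
  qed
  have n2u': "n2 \<bullet> u = n2 \<bullet> b - n2 \<bullet> a" using A2 by (simp add: u_def inner_diff_right \<beta>_def)
  have n1v': "n1 \<bullet> v = n1 \<bullet> a - n1 \<bullet> b" using A1 by (simp add: v_def inner_diff_right \<alpha>_def)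
  have L1: "\<bar>n2 \<bullet> u\<bar> \<le> dist a b"
    using inner_le_norm_unit[OF n2(1), of "b - a"] n2u' by (simp add: inner_diff_right dist_norm norm_minus_commute)
  have L2: "\<bar>n1 \<bullet> v\<bar> \<le> dist a b"
    using inner_le_norm_unit[OF n1(1), of "a - b"] n1v' by (simp add: inner_diff_right dist_norm)
  have cu: "\<bar>c\<bar> * norm u \<le> dist a b" using L1 n2u nu by (simp add: abs_mult)
  have cv: "\<bar>c\<bar> * norm v \<le> dist a b" using L2 n1v nv by (simp add: abs_mult)
  have daA: "dist a A = norm u" by (simp add: u_def dist_norm norm_minus_commute)
  have dAb: "dist A b = norm v" by (simp add: v_def dist_norm)
  define ps where "ps = [a, A, b]"
  have pl: "plen ps = norm u + norm v" by (simp add: ps_def daA dAb)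
  have segs: "segs (- interior K) ps"
  proof -
    have "n1 \<noteq> 0" "n2 \<noteq> 0" using n1(1) n2(1) by auto
    then show ?thesis unfolding ps_def
      using NI[of n1 K "n1 \<bullet> a" a A] NI[of n2 K "n2 \<bullet> b" A b] n1 n2 A1 A2 \<alpha>_def \<beta>_def by auto
  qed
  have part2: "plen ps \<le> 2 * dist a b" if e0: "e \<ge> 0"
  proof -
    have uv: "u \<bullet> v = cr n1 u * cr n1 v" using I3[of n1 u v] n1(1) u0 by simp
    have crv: "cr n1 v = e * cr n2 v" using I4[of n2 n1 v] n2(1) v0 by (simp add: e_def inner_commute)
    have sgn: "0 \<le> (n2 \<bullet> u) * (n1 \<bullet> v)"
      using n2u' n1v' n2(2) n1(2) ab by (intro mult_nonneg_nonneg) auto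
    have "(n2 \<bullet> u) * (n1 \<bullet> v) = - (c*c) * (cr n1 u * cr n2 v)" using n2u n1v by (simp add: algebra_simps)
    with sgn have "(c*c) * (cr n1 u * cr n2 v) \<le> 0" by (simp add: mult_minus_left)
    moreover have "c * c > 0" using cne not_real_square_gt_zero[of c] by blast
    ultimately have X: "cr n1 u * cr n2 v \<le> 0" by (metis mult_le_cancel_left_pos mult_zero_right)
    have "u \<bullet> v = e * (cr n1 u * cr n2 v)" using uv crv by (simp add: algebra_simps)
    then have uvle: "u \<bullet> v \<le> 0" using X e0 by (simp add: mult_nonneg_nonpos)
    have "(dist a b)^2 = (norm (v - u))^2"
      by (simp add: u_def v_def dist_norm norm_minus_commute)
    also have "\<dots> = (norm u)^2 + (norm v)^2 - 2 * (u \<bullet> v)"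
      by (simp add: power2_norm_eq_inner inner_diff_left inner_diff_right inner_commute)
    finally have sq: "(norm u)^2 + (norm v)^2 \<le> (dist a b)^2" using uvle by linarith
    have "(norm u)^2 \<le> (dist a b)^2" using sq zero_le_power2[of "norm v"] by linarith
    then have "norm u \<le> dist a b" by (rule power2_le_imp_le) simp
    moreover have "(norm v)^2 \<le> (dist a b)^2" using sq zero_le_power2[of "norm u"] by linarith
    then have "norm v \<le> dist a b" by (rule power2_le_imp_le) simp
    ultimately show ?thesis using pl by linarith
  qed
  have "\<bar>c\<bar> * plen ps \<le> 2 * dist a b" using cu cv pl by (simp add: algebra_simps)
  then show ?thesis using segs part2 by (intro exI[of _ ps]) (auto simp: ps_def c_def e_def)
qed




lemma far_lemma:
  fixes K :: "(real^2) set"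
  assumes n1: "n1 \<bullet> n1 = 1" "\<forall>y\<in>K. n1 \<bullet> y \<le> n1 \<bullet> a"
    and n2: "n2 \<bullet> n2 = 1" "\<forall>y\<in>K. n2 \<bullet> y \<le> n2 \<bullet> b"
    and ab: "a \<in> K" "b \<in> K" and e0: "n1 \<bullet> n2 < 0" and D: "\<forall>y\<in>K. dist y a \<le> D"
  shows "\<exists>ps. ps \<noteq> [] \<and> hd ps = a \<and> last ps = b \<and> segs (- interior K) ps \<and>
     plen ps \<le> 8 * D + 5 * dist a b"
proof -
  define e where "e = n1 \<bullet> n2"
  define L where "L = dist a b"
  have D0: "0 \<le> D" using D ab(1) by force
  define r1 :: "real^2" where "r1 = vector [- n1$2, n1$1]"
  define d2 :: "real^2" where "d2 = vector [n2$2, - n2$1]"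
  have r1n: "n1 \<bullet> r1 = 0" by (simp add: r1_def inner2 algebra_simps)
  have d2n: "n2 \<bullet> d2 = 0" by (simp add: d2_def inner2 algebra_simps)
  have r1r1: "r1 \<bullet> r1 = 1" using n1(1) by (simp add: r1_def inner2 algebra_simps)
  have d2d2: "d2 \<bullet> d2 = 1" using n2(1) by (simp add: d2_def inner2 algebra_simps)
  have r1d2: "r1 \<bullet> d2 = - e" by (simp add: r1_def d2_def e_def inner2 algebra_simps)
  define vv where "vv = r1 + d2"
  define k where "k = 1 - e"
  have k1: "k > 1" using e0 by (simp add: k_def e_def)
  have vr1: "vv \<bullet> r1 = k" using r1r1 r1d2 by (simp add: vv_def k_def inner_add_left inner_commute[of d2 r1])
  have vd2: "vv \<bullet> d2 = k" using d2d2 r1d2 by (simp add: vv_def k_def inner_add_left)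
  have nr1: "norm r1 = 1" using r1r1 by (simp add: norm_eq_sqrt_inner)
  have nd2: "norm d2 = 1" using d2d2 by (simp add: norm_eq_sqrt_inner)
  have nvv: "norm vv \<le> 2" using norm_triangle_ineq[of r1 d2] nr1 nd2 by (simp add: vv_def)
  have vv0: "vv \<noteq> 0" using vr1 k1 by auto
  define m where "m = vv \<bullet> a + 2 * D"
  have Kb: "\<forall>y\<in>K. vv \<bullet> y \<le> m"
  proof
    fix y assume y: "y \<in> K"
    have "vv \<bullet> (y - a) \<le> norm vv * norm (y - a)" using Cauchy_Schwarz_ineq2[of vv "y - a"] by linarith
    also have "\<dots> \<le> 2 * D"
      using nvv D y by (intro mult_mono) (auto simp: dist_norm)
    finally show "vv \<bullet> y \<le> m" by (simp add: m_def inner_diff_right)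
  qed
  define s1 where "s1 = 2 * D / k"
  define s2 where "s2 = (m - vv \<bullet> b) / k"
  define P1 where "P1 = a + s1 *\<^sub>R r1"
  define P2 where "P2 = b + s2 *\<^sub>R d2"
  have vP1: "vv \<bullet> P1 = m" using vr1 k1 by (simp add: P1_def s1_def m_def inner_add_right)
  have vP2: "vv \<bullet> P2 = m" using vd2 k1 by (simp add: P2_def s2_def inner_add_right)
  have n1P1: "n1 \<bullet> P1 = n1 \<bullet> a" using r1n by (simp add: P1_def inner_add_right)
  have n2P2: "n2 \<bullet> P2 = n2 \<bullet> b" using d2n by (simp add: P2_def inner_add_right)
  define ps where "ps = [a, P1, P2, b]"
  have segs: "segs (- interior K) ps"
  proof -
    have "n1 \<noteq> 0" "n2 \<noteq> 0" using n1(1) n2(1) by auto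
    then show ?thesis unfolding ps_def
      using NI[of n1 K "n1 \<bullet> a" a P1] NI[of vv K m P1 P2] NI[of n2 K "n2 \<bullet> b" P2 b]
        n1 n2 n1P1 n2P2 vP1 vP2 vv0 Kb by auto
  qed
  have dP1: "dist a P1 \<le> 2 * D"
  proof -
    have "dist a P1 = \<bar>s1\<bar>" using nr1 by (simp add: P1_def dist_norm)
    also have "\<bar>s1\<bar> = 2 * D / k" using D0 k1 by (simp add: s1_def)
    also have "\<dots> \<le> 2 * D" using D0 k1 by (simp add: divide_le_eq mult_le_cancel_left1)
    finally show ?thesis .
  qed
  have dP2: "dist P2 b \<le> 2 * D + 2 * L"
  proof -
    have "dist P2 b = \<bar>s2\<bar>" using nd2 by (simp add: P2_def dist_norm)
    also have "\<bar>s2\<bar> = \<bar>m - vv \<bullet> b\<bar> / k" using k1 by (simp add: s2_def)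
    also have "\<dots> \<le> \<bar>m - vv \<bullet> b\<bar>" using k1 by (simp add: divide_le_eq mult_le_cancel_left1)
    also have "\<bar>m - vv \<bullet> b\<bar> \<le> 2 * D + \<bar>vv \<bullet> (a - b)\<bar>"
      using D0 by (simp add: m_def inner_diff_right)
    also have "\<bar>vv \<bullet> (a - b)\<bar> \<le> norm vv * norm (a - b)" by (rule Cauchy_Schwarz_ineq2)
    also have "\<dots> \<le> 2 * L" using mult_right_mono[OF nvv norm_ge_zero[of "a - b"]] by (simp add: L_def dist_norm)
    finally show ?thesis by simp
  qed
  have "dist P1 P2 \<le> dist P1 a + dist a b + dist b P2"
    using dist_triangle[of P1 P2 a] dist_triangle[of a P2 b] by linarith
  then have "plen ps \<le> 8 * D + 5 * L" using dP1 dP2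
    by (simp add: ps_def L_def dist_commute)
  then show ?thesis using segs by (intro exI[of _ ps]) (auto simp: ps_def L_def)
qed

lemma width_lemma:
  fixes K :: "(real^2) set"
  assumes n1: "n1 \<bullet> n1 = 1" "\<forall>y\<in>K. n1 \<bullet> y \<le> n1 \<bullet> a"
    and n2: "n2 \<bullet> n2 = 1" "\<forall>y\<in>K. n2 \<bullet> y \<le> n2 \<bullet> b"
    and ab: "a \<in> K" "b \<in> K" and e0: "n1 \<bullet> n2 < 0" and c4: "(cr n1 n2)^2 < 1/4"
    and D: "\<forall>y\<in>K. dist y a \<le> D" and bK: "bounded K"
  shows "width K \<le> 2 * (dist a b + \<bar>cr n1 n2\<bar> * D)"
proof -
  define e where "e = n1 \<bullet> n2"
  define c where "c = cr n1 n2"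
  define L where "L = dist a b"
  have ce: "e^2 + c^2 = 1" using lagrange[OF n1(1), of n2] n2(1) by (simp add: e_def c_def power2_norm_eq_inner)
  have eh: "-e > 1/2"
  proof (rule ccontr)
    assume "\<not> - e > 1/2"
    then have "0 \<le> -e" "-e \<le> 1/2" using e0 by (auto simp: e_def)
    then have "(-e) * (-e) \<le> (1/2) * (1/2)" by (intro mult_mono) auto
    then show False using ce c4 by (simp add: c_def power2_eq_square)
  qed
  have lower: "\<forall>y\<in>K. n1 \<bullet> a - 2 * (L + \<bar>c\<bar> * D) \<le> n1 \<bullet> y"
  proof
    fix y assume y: "y \<in> K"
    define u where "u = y - a"
    define \<delta> where "\<delta> = - (n1 \<bullet> u)"
    have \<delta>0: "\<delta> \<ge> 0" using n1(2) y by (simp add: \<delta>_def u_def inner_diff_right)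
    have I: "n2 \<bullet> u = e * (n1 \<bullet> u) + c * cr n1 u"
      using I3[of n1 n2 u] n1(1) by (simp add: e_def c_def)
    have n2u: "n2 \<bullet> u \<le> L"
    proof -
      have "n2 \<bullet> u \<le> n2 \<bullet> (b - a)" using n2(2) y by (simp add: u_def inner_diff_right)
      also have "\<dots> \<le> L" using inner_le_norm_unit[OF n2(1), of "b - a"] by (simp add: L_def dist_norm norm_minus_commute)
      finally show ?thesis .
    qed
    have "norm u \<le> D" using D y by (simp add: u_def dist_norm)
    then have crb: "\<bar>cr n1 u\<bar> \<le> D" using cr_le_norm[OF n1(1), of u] by linarith
    have "- (c * cr n1 u) \<le> \<bar>c\<bar> * D"
    proof -
      have "- (c * cr n1 u) \<le> \<bar>c * cr n1 u\<bar>" by linarith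
      also have "\<dots> = \<bar>c\<bar> * \<bar>cr n1 u\<bar>" by (simp add: abs_mult)
      also have "\<dots> \<le> \<bar>c\<bar> * D" using crb by (intro mult_left_mono) auto
      finally show ?thesis .
    qed
    then have A: "(-e) * \<delta> \<le> L + \<bar>c\<bar> * D" using I n2u by (simp add: \<delta>_def algebra_simps)
    have B: "(1/2) * \<delta> \<le> (-e) * \<delta>" using eh \<delta>0 by (intro mult_right_mono) auto
    have "(1/2) * \<delta> \<le> L + \<bar>c\<bar> * D" using order_trans[OF B A] .
    then have "\<delta> \<le> 2 * (L + \<bar>c\<bar> * D)" by simp
    then show "n1 \<bullet> a - 2 * (L + \<bar>c\<bar> * D) \<le> n1 \<bullet> y" by (simp add: \<delta>_def u_def inner_diff_right)
  qed
  have "width K \<le> n1 \<bullet> a - (n1 \<bullet> a - 2 * (L + \<bar>c\<bar> * D))"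
    using WB[OF bK _ n1(1) n1(2) lower] ab(1) by blast
  then show ?thesis by (simp add: L_def c_def)
qed




lemma fin_bound:
  assumes "lam > 0" "lam * p \<le> 40 * L"
  shows "p \<le> 40 / lam * (L::real)"
  using assms by (simp add: field_simps)

lemma small_bound:
  assumes "lam > 0" "lam \<le> 1" "0 \<le> p" "p \<le> 4 * (L::real)"
  shows "p \<le> 40 / lam * L"
proof (rule fin_bound[OF assms(1)])
  have "lam * p \<le> 1 * p" using assms by (intro mult_right_mono) auto
  then show "lam * p \<le> 40 * L" using assms by linarith
qed

lemma G:
  fixes K :: "(real^2) set"
  assumes cK: "compact K" "convex K" "interior K \<noteq> {}" and ab: "a \<in> frontier K" "b \<in> frontier K"
    and fat: "fat lam K" and lam: "0 < lam" "lam \<le> 1"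
  shows "\<exists>ps. ps \<noteq> [] \<and> hd ps = a \<and> last ps = b \<and> segs (- interior K) ps \<and> plen ps \<le> 40 / lam * dist a b"
proof (cases "a = b")
  case True
  then show ?thesis by (intro exI[of _ "[a]"]) auto
next
  case False
  have clK: "closed K" and bK: "bounded K" using cK compact_imp_closed compact_imp_bounded by auto
  have aK: "a \<in> K" and bK': "b \<in> K" using ab frontier_subset_closed[OF clK] by auto
  define L where "L = dist a b"
  have L0: "L > 0" using False by (simp add: L_def)
  define D where "D = diameter K"
  have Dd: "\<forall>y\<in>K. dist y a \<le> D" using diameter_bounded_bound[OF bK _ aK] by (simp add: D_def)
  have LD: "L \<le> D" using Dd bK' by (auto simp: L_def dist_commute)
  have D0: "D > 0" using L0 LD by linarith
  have wD: "lam * D \<le> width K" using fat D0 by (simp add: fat_def D_def pos_le_divide_eq)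
  obtain n1 where n1: "n1 \<bullet> n1 = 1" "\<forall>y\<in>K. n1 \<bullet> y \<le> n1 \<bullet> a" using SUPP[OF cK(2) clK cK(3) ab(1)] by blast
  obtain n2 where n2: "n2 \<bullet> n2 = 1" "\<forall>y\<in>K. n2 \<bullet> y \<le> n2 \<bullet> b" using SUPP[OF cK(2) clK cK(3) ab(2)] by blast
  define e where "e = n1 \<bullet> n2"
  define c where "c = cr n1 n2"
  have ce: "e^2 + c^2 = 1" using lagrange[OF n1(1), of n2] n2(1) by (simp add: e_def c_def power2_norm_eq_inner)
  have ge: "40 / lam * L \<ge> L" using lam L0 by (simp add: field_simps)
  have plen0: "\<And>ps. plen ps \<ge> 0" by (rule plen_nonneg)
  show ?thesis
  proof (cases "e \<ge> 0")
    case e0: True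
    show ?thesis
    proof (cases "c = 0")
      case False
      obtain ps where ps: "ps \<noteq> []" "hd ps = a" "last ps = b" "segs (- interior K) ps" "plen ps \<le> 2 * L"
        using apex_lemma[OF n1 n2 aK bK'] False e0 by (auto simp: c_def e_def L_def)
      have "plen ps \<le> 40 / lam * L" using ps(5) lam plen0[of ps] L0 by (intro small_bound) auto
      then show ?thesis using ps by (auto simp: L_def)
    next
      case True
      have "e^2 = 1" using ce True by simp
      then have e1: "e = 1" using e0 by (simp add: power2_eq_1_iff)
      have "(norm (n1 - n2))^2 = 0"
        using n1(1) n2(1) e1 by (simp add: power2_norm_eq_inner inner_diff_left inner_diff_right inner_commute[of n2 n1] e_def)
      then have "n1 = n2" by simp
      then have eqab: "n1 \<bullet> b = n1 \<bullet> a" using n1(2) n2(2) aK bK' by (metis order_antisym)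
      have "n1 \<noteq> 0" using n1(1) by auto
      then have "segs (- interior K) [a, b]" using NI[of n1 K "n1 \<bullet> a" a b] n1 eqab by auto
      then show ?thesis using ge by (intro exI[of _ "[a, b]"]) (auto simp: L_def)
    qed
  next
    case e0: False
    show ?thesis
    proof (cases "c^2 \<ge> 1/4")
      case True
      have ch: "\<bar>c\<bar> \<ge> 1/2"
      proof (rule ccontr)
        assume "\<not> \<bar>c\<bar> \<ge> 1/2"
        then have "\<bar>c\<bar> * \<bar>c\<bar> < (1/2) * (1/2)" by (intro mult_strict_mono') auto
        then show False using True by (simp add: power2_eq_square)
      qed
      then have cne: "cr n1 n2 \<noteq> 0" by (auto simp: c_def)
      obtain ps where ps: "ps \<noteq> []" "hd ps = a" "last ps = b" "segs (- interior K) ps" "\<bar>c\<bar> * plen ps \<le> 2 * L"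
        using apex_lemma[OF n1 n2 aK bK' cne] by (auto simp: c_def L_def)
      have "(1/2) * plen ps \<le> \<bar>c\<bar> * plen ps" using ch plen0 by (intro mult_right_mono) auto
      then have "plen ps \<le> 4 * L" using ps(5) by linarith
      then have "plen ps \<le> 40 / lam * L" using lam plen0 by (intro small_bound) auto
      then show ?thesis using ps by (auto simp: L_def)
    next
      case False
      have wb: "width K \<le> 2 * (L + \<bar>c\<bar> * D)"
        using width_lemma[OF n1 n2 aK bK' _ _ Dd bK] e0 False by (simp add: e_def c_def L_def)
      show ?thesis
      proof (cases "\<bar>c\<bar> * D \<ge> L")
        case True
        have "lam * D \<le> (4 * \<bar>c\<bar>) * D" using wD wb True by (simp add: algebra_simps)
        then have lc: "lam \<le> 4 * \<bar>c\<bar>" using D0 by (simp add: mult_le_cancel_right)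
        have cne: "cr n1 n2 \<noteq> 0" using True L0 by (auto simp: c_def)
        obtain ps where ps: "ps \<noteq> []" "hd ps = a" "last ps = b" "segs (- interior K) ps" "\<bar>c\<bar> * plen ps \<le> 2 * L"
          using apex_lemma[OF n1 n2 aK bK' cne] by (auto simp: c_def L_def)
        have "lam * plen ps \<le> (4 * \<bar>c\<bar>) * plen ps" using lc plen0 by (intro mult_right_mono) auto
        then have "lam * plen ps \<le> 40 * L" using ps(5) L0 by linarith
        then have "plen ps \<le> 40 / lam * L" by (rule fin_bound[OF lam(1)])
        then show ?thesis using ps by (auto simp: L_def)
      next
        case False
        have gen: "\<And>X W. lam * D \<le> W \<Longrightarrow> W \<le> 2 * (L + X) \<Longrightarrow> X < L \<Longrightarrow> lam * D < 4 * L" by argo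
        have "lam * D < 4 * L" using gen[OF wD wb] False by linarith
        obtain ps where ps: "ps \<noteq> []" "hd ps = a" "last ps = b" "segs (- interior K) ps" "plen ps \<le> 8 * D + 5 * L"
          using far_lemma[OF n1 n2 aK bK' _ Dd] e0 by (auto simp: e_def L_def)
        have "lam * plen ps \<le> lam * (8 * D + 5 * L)" using ps(5) lam by (intro mult_left_mono) auto
        also have "\<dots> = 8 * (lam * D) + 5 * (lam * L)" by (simp add: algebra_simps)
        also have "\<dots> \<le> 8 * (4 * L) + 5 * L"
        proof -
          have "lam * L \<le> 1 * L" using lam L0 by (intro mult_right_mono) auto
          then show ?thesis using \<open>lam * D < 4 * L\<close> by argo
        qed
        finally have "lam * plen ps \<le> 40 * L" using L0 by argo
        then have "plen ps \<le> 40 / lam * L" by (rule fin_bound[OF lam(1)])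
        then show ?thesis using ps by (auto simp: L_def)
      qed
    qed
  qed
qed




lemma boundary_path:
  fixes K :: "(real^2) set"
  assumes "convex_polygon K" "a \<in> frontier K" "b \<in> frontier K" "fat lam K" "0 < lam" "lam \<le> 1"
  shows "\<exists>ps. ps \<noteq> [] \<and> hd ps = a \<and> last ps = b \<and> segs (frontier K) ps \<and> plen ps \<le> 40 / lam * dist a b"
proof -
  have pK: "polytope K" "interior K \<noteq> {}" using assms(1) by (auto simp: convex_polygon_def)
  have cK: "compact K" "convex K" "closed K" "polyhedron K"
    using pK polytope_imp_compact polytope_imp_convex polytope_imp_closed polytope_imp_polyhedron by auto
  obtain ps where ps: "ps \<noteq> []" "hd ps = a" "last ps = b" "segs (- interior K) ps" "plen ps \<le> 40 / lam * dist a b"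
    using G[OF cK(1,2) pK(2) assms(2-6)] by blast
  have aK: "a \<in> K" "b \<in> K" using assms(2,3) frontier_subset_closed[OF cK(3)] by auto
  obtain qs where qs: "qs \<noteq> []" "hd qs = hd ps" "last qs = last ps" "segs (K - interior K) qs" "plen qs \<le> plen ps"
    using shorten[OF cK(4) ps(1) _ _ ps(4)] ps(2,3) aK by auto
  have "K - interior K = frontier K" using cK(3) by (simp add: frontier_def closure_closed)
  then show ?thesis using qs ps by (intro exI[of _ qs]) auto
qed

lemma seg_nbhd:
  fixes s t :: "real^2"
  assumes "(1 - \<tau>) *\<^sub>R s + \<tau> *\<^sub>R t \<in> interior Q"
  shows "\<exists>\<delta>>0. \<forall>\<tau>'. \<bar>\<tau>' - \<tau>\<bar> < \<delta> \<longrightarrow> (1 - \<tau>') *\<^sub>R s + \<tau>' *\<^sub>R t \<in> Q"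
proof -
  obtain \<epsilon> where e: "\<epsilon> > 0" "ball ((1 - \<tau>) *\<^sub>R s + \<tau> *\<^sub>R t) \<epsilon> \<subseteq> Q"
    using assms mem_interior by blast
  define \<delta> where "\<delta> = \<epsilon> / (norm (t - s) + 1)"
  have "norm (t - s) + 1 > 0" by (simp add: add_nonneg_pos)
  then have d0: "\<delta> > 0" and np: "norm (t - s) + 1 > 0" using e(1) by (simp_all add: \<delta>_def)
  have "(1 - \<tau>') *\<^sub>R s + \<tau>' *\<^sub>R t \<in> Q" if "\<bar>\<tau>' - \<tau>\<bar> < \<delta>" for \<tau>'
  proof -
    have eq: "(1 - \<tau>') *\<^sub>R s + \<tau>' *\<^sub>R t - ((1 - \<tau>) *\<^sub>R s + \<tau> *\<^sub>R t) = (\<tau>' - \<tau>) *\<^sub>R (t - s)"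
      by (simp add: algebra_simps)
    have "dist ((1 - \<tau>) *\<^sub>R s + \<tau> *\<^sub>R t) ((1 - \<tau>') *\<^sub>R s + \<tau>' *\<^sub>R t) = \<bar>\<tau>' - \<tau>\<bar> * norm (t - s)"
      by (simp add: dist_norm norm_minus_commute[of "(1 - \<tau>) *\<^sub>R s + \<tau> *\<^sub>R t"] eq)
    also have "\<dots> \<le> \<delta> * norm (t - s)" using that by (intro mult_right_mono) auto
    also have "\<dots> < \<epsilon>"
    proof -
      have "\<delta> * norm (t - s) < \<delta> * (norm (t - s) + 1)" using d0 by simp
      also have "\<dots> = \<epsilon>" using np by (simp add: \<delta>_def)
      finally show ?thesis .
    qed
    finally show ?thesis using e(2) by auto
  qed
  then show ?thesis using d0 by blast
qed




lemma p_dist: "dist ((1 - x) *\<^sub>R s + x *\<^sub>R t) ((1 - y) *\<^sub>R s + y *\<^sub>R (t::real^2)) = \<bar>x - y\<bar> * dist s t"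
proof -
  have "(1 - x) *\<^sub>R s + x *\<^sub>R t - ((1 - y) *\<^sub>R s + y *\<^sub>R t) = (x - y) *\<^sub>R (t - s)"
    by (simp add: algebra_simps)
  then show ?thesis by (simp add: dist_norm norm_minus_commute[of t s])
qed

lemma last_app_tl: "ps \<noteq> [] \<Longrightarrow> qs \<noteq> [] \<Longrightarrow> last ps = hd qs \<Longrightarrow> last (ps @ tl qs) = last qs"
proof (cases qs)
  case (Cons q r)
  assume "ps \<noteq> []" "last ps = hd qs"
  then show ?thesis using Cons by (cases r) auto
qed simp

lemma main_lemma:
  fixes lam :: real and h :: nat and P0 :: "(real^2) set" and Q :: "nat \<Rightarrow> (real^2) set"
  assumes lam: "0 < lam" "lam \<le> 1" and P0: "convex_polygon P0"
    and Qs: "\<forall>i\<in>{1..h}. convex_polygon (Q i) \<and> fat lam (Q i) \<and> Q i \<subseteq> interior P0"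
    and disj: "\<forall>i\<in>{1..h}. \<forall>j\<in>{1..h}. i \<noteq> j \<longrightarrow> Q i \<inter> Q j = {}"
  shows "\<forall>s t. card {i\<in>{1..h}. closed_segment s t \<inter> interior (Q i) \<noteq> {}} = n \<longrightarrow>
     s \<in> P0 - (\<Union>i\<in>{1..h}. interior (Q i)) \<longrightarrow> t \<in> P0 - (\<Union>i\<in>{1..h}. interior (Q i)) \<longrightarrow>
     (\<exists>ps. ps \<noteq> [] \<and> hd ps = s \<and> last ps = t \<and> segs (P0 - (\<Union>i\<in>{1..h}. interior (Q i))) ps
        \<and> plen ps \<le> 40 / lam * dist s t)"
proof (induction n rule: less_induct)
  case (less n)
  define P where "P = P0 - (\<Union>i\<in>{1..h}. interior (Q i))"
  define Kc where "Kc = 40 / lam"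
  have Kc1: "Kc \<ge> 1" using lam by (simp add: Kc_def field_simps)
  have convP0: "convex P0" using P0 polytope_imp_convex by (auto simp: convex_polygon_def)
  have clQ: "closed (Q i)" if "i \<in> {1..h}" for i
  proof -
    have "polytope (Q i)" using Qs that by (auto simp: convex_polygon_def)
    then show ?thesis by (rule polytope_imp_closed)
  qed
  have frP: "frontier (Q i) \<subseteq> P" if i: "i \<in> {1..h}" for i
  proof
    fix x assume x: "x \<in> frontier (Q i)"
    have xQ: "x \<in> Q i" using x frontier_subset_closed[OF clQ[OF i]] by auto
    have "x \<in> P0" using xQ Qs i interior_subset by blast
    moreover have "x \<notin> interior (Q i)" using x by (simp add: frontier_def)
    moreover have "x \<notin> interior (Q j)" if "j \<in> {1..h}" "j \<noteq> i" for j
      using disj i that xQ interior_subset by blast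
    ultimately show "x \<in> P" unfolding P_def by blast
  qed
  show ?case
  proof (intro allI impI)
    fix s t
    assume cnt: "card {i\<in>{1..h}. closed_segment s t \<inter> interior (Q i) \<noteq> {}} = n"
      and sP: "s \<in> P0 - (\<Union>i\<in>{1..h}. interior (Q i))" and tP: "t \<in> P0 - (\<Union>i\<in>{1..h}. interior (Q i))"
    define I where "I = {i\<in>{1..h}. closed_segment s t \<inter> interior (Q i) \<noteq> {}}"
    have finI: "finite I" by (simp add: I_def)
    show "\<exists>ps. ps \<noteq> [] \<and> hd ps = s \<and> last ps = t \<and> segs (P0 - (\<Union>i\<in>{1..h}. interior (Q i))) ps
        \<and> plen ps \<le> 40 / lam * dist s t"
    proof (cases "I = {}")
      case True
      have "closed_segment s t \<subseteq> P0" using sP tP convP0 by (intro closed_segment_subset) auto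
      moreover have "closed_segment s t \<inter> interior (Q i) = {}" if "i \<in> {1..h}" for i
        using True that by (auto simp: I_def)
      ultimately have "closed_segment s t \<subseteq> P0 - (\<Union>i\<in>{1..h}. interior (Q i))" by blast
      moreover have "dist s t \<le> 40 / lam * dist s t"
        using Kc1 mult_right_mono[OF Kc1 zero_le_dist[of s t]] by (simp add: Kc_def)
      ultimately show ?thesis by (intro exI[of _ "[s, t]"]) auto
    next
      case False
      then obtain i where iI: "i \<in> I" by blast
      have i: "i \<in> {1..h}" using iI by (simp add: I_def)
      obtain x0 where x0: "x0 \<in> closed_segment s t" "x0 \<in> interior (Q i)" using iI by (auto simp: I_def)
      define p where "p = (\<lambda>\<tau>::real. (1 - \<tau>) *\<^sub>R s + \<tau> *\<^sub>R t)"
      define T where "T = {0..1} \<inter> p -` Q i"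
      have contp: "isCont p x" for x unfolding p_def by (intro continuous_intros)
      have compT: "compact T" unfolding T_def
        using compact_Int_closed[OF compact_Icc continuous_closed_vimage[OF clQ[OF i] contp]] by simp
      obtain u0 where u0: "0 \<le> u0" "u0 \<le> 1" "x0 = p u0" using x0(1) by (auto simp: closed_segment_def p_def)
      have "p u0 \<in> Q i" using u0(3) x0(2) interior_subset by blast
      then have "u0 \<in> T" using u0 by (simp add: T_def)
      then have Tne: "T \<noteq> {}" by blast
      obtain ta where ta: "ta \<in> T" "\<forall>y\<in>T. ta \<le> y" using compact_attains_inf[OF compT Tne] by blast
      obtain tb where tb: "tb \<in> T" "\<forall>y\<in>T. y \<le> tb" using compact_attains_sup[OF compT Tne] by blast
      have ta01: "0 \<le> ta" "ta \<le> 1" and tb01: "0 \<le> tb" "tb \<le> 1" using ta tb by (auto simp: T_def)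
      have tab: "ta \<le> tb" using ta tb by auto
      define a where "a = p ta"
      define b where "b = p tb"
      have aQ: "a \<in> Q i" and bQ: "b \<in> Q i" using ta tb by (auto simp: T_def a_def b_def)
      have sNI: "s \<notin> interior (Q i)" and tNI: "t \<notin> interior (Q i)" using sP tP i by auto
      have aNI: "a \<notin> interior (Q i)"
      proof
        assume ai: "a \<in> interior (Q i)"
        show False
        proof (cases "ta = 0")
          case True then show False using ai sNI by (simp add: a_def p_def)
        next
          case False
          obtain \<delta> where d: "\<delta> > 0" "\<forall>\<tau>'. \<bar>\<tau>' - ta\<bar> < \<delta> \<longrightarrow> p \<tau>' \<in> Q i"
            using seg_nbhd[of ta s t "Q i"] ai by (auto simp: a_def p_def)
          define \<tau> where "\<tau> = ta - min ta \<delta> / 2"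
          have "\<bar>\<tau> - ta\<bar> < \<delta>" "0 \<le> \<tau>" "\<tau> \<le> 1" "\<tau> < ta" using d(1) False ta01 by (auto simp: \<tau>_def)
          then have "\<tau> \<in> T" "\<tau> < ta" using d(2) by (auto simp: T_def)
          then show False using ta(2) by fastforce
        qed
      qed
      have bNI: "b \<notin> interior (Q i)"
      proof
        assume bi: "b \<in> interior (Q i)"
        show False
        proof (cases "tb = 1")
          case True then show False using bi tNI by (simp add: b_def p_def)
        next
          case False
          obtain \<delta> where d: "\<delta> > 0" "\<forall>\<tau>'. \<bar>\<tau>' - tb\<bar> < \<delta> \<longrightarrow> p \<tau>' \<in> Q i"
            using seg_nbhd[of tb s t "Q i"] bi by (auto simp: b_def p_def)
          obtain mm where m: "mm > 0" "mm \<le> 1 - tb" "mm \<le> \<delta>"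
            using d(1) False tb01 by (intro that[of "min (1 - tb) \<delta>"]) auto
          define \<tau> where "\<tau> = tb + mm / 2"
          have "\<bar>\<tau> - tb\<bar> < \<delta>" using m tb01 unfolding \<tau>_def by (simp add: field_simps)
          moreover have "0 \<le> \<tau>" using m tb01 unfolding \<tau>_def by (simp add: field_simps)
          moreover have "\<tau> \<le> 1" using m tb01 unfolding \<tau>_def by (simp add: field_simps)
          moreover have "tb < \<tau>" using m tb01 unfolding \<tau>_def by (simp add: field_simps)
          ultimately have "\<tau> \<in> T" "tb < \<tau>" using d(2) by (auto simp: T_def)
          then show False using tb(2) by fastforce
        qed
      qed
      have aF: "a \<in> frontier (Q i)" and bF: "b \<in> frontier (Q i)"
        using aQ bQ aNI bNI clQ[OF i] by (auto simp: frontier_def closure_closed)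
      have aP: "a \<in> P" and bP: "b \<in> P" using frP[OF i] aF bF by auto
      have aS: "a \<in> closed_segment s t" and bS: "b \<in> closed_segment s t"
        using ta01 tb01 by (auto simp: a_def b_def p_def closed_segment_def)
      define Ia where "Ia = {j\<in>{1..h}. closed_segment s a \<inter> interior (Q j) \<noteq> {}}"
      define Ib where "Ib = {j\<in>{1..h}. closed_segment b t \<inter> interior (Q j) \<noteq> {}}"
      have saS: "closed_segment s a \<subseteq> closed_segment s t" using aS by (intro closed_segment_subset) auto
      have btS: "closed_segment b t \<subseteq> closed_segment s t" using bS by (intro closed_segment_subset) auto
      have sai: "closed_segment s a \<inter> interior (Q i) = {}"
      proof (rule ccontr)
        assume "closed_segment s a \<inter> interior (Q i) \<noteq> {}"
        then obtain x where x: "x \<in> closed_segment s a" "x \<in> interior (Q i)" by blast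
        obtain \<mu> where mu: "0 \<le> \<mu>" "\<mu> \<le> 1" "x = (1 - \<mu>) *\<^sub>R s + \<mu> *\<^sub>R a" using x(1) by (auto simp: closed_segment_def)
        have xp: "x = p (\<mu> * ta)" by (simp add: mu(3) a_def p_def algebra_simps)
        have "\<mu> * ta \<le> ta" using mu ta01 by (simp add: mult_left_le_one_le)
        moreover have "\<mu> * ta \<in> T" using xp x(2) interior_subset mu ta01 by (auto simp: T_def mult_le_one)
        ultimately have "\<mu> * ta = ta" using ta(2) by force
        then have "x = a" using xp by (simp only: a_def)
        then show False using x(2) aNI by simp
      qed
      have bti: "closed_segment b t \<inter> interior (Q i) = {}"
      proof (rule ccontr)
        assume "closed_segment b t \<inter> interior (Q i) \<noteq> {}"
        then obtain x where x: "x \<in> closed_segment b t" "x \<in> interior (Q i)" by blast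
        obtain \<mu> where mu: "0 \<le> \<mu>" "\<mu> \<le> 1" "x = (1 - \<mu>) *\<^sub>R b + \<mu> *\<^sub>R t" using x(1) by (auto simp: closed_segment_def)
        have xp: "x = p (tb + \<mu> * (1 - tb))" by (simp add: mu(3) b_def p_def algebra_simps)
        have m0: "0 \<le> \<mu> * (1 - tb)" using mu tb01 by simp
        have "\<mu> * (1 - tb) \<le> 1 - tb" using mu tb01 by (simp add: mult_left_le_one_le)
        then have "tb + \<mu> * (1 - tb) \<in> T" using xp x(2) interior_subset m0 tb01 by (auto simp: T_def)
        then have "\<mu> * (1 - tb) = 0" using tb(2) m0 by force
        then have "x = b" using xp by (simp only: b_def add_0_right)
        then show False using x(2) bNI by simp
      qed
      have IaI: "Ia \<subseteq> I - {i}" using saS sai by (auto simp: Ia_def I_def)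
      have IbI: "Ib \<subseteq> I - {i}" using btS bti by (auto simp: Ib_def I_def)
      have "card (I - {i}) < card I" using finI iI by (rule card_Diff1_less)
      then have ca: "card Ia < n" and cb: "card Ib < n"
        using card_mono[OF _ IaI] card_mono[OF _ IbI] finI cnt by (auto simp: I_def)
      have sP': "s \<in> P0 - (\<Union>i\<in>{1..h}. interior (Q i))" and aP': "a \<in> P0 - (\<Union>i\<in>{1..h}. interior (Q i))"
        and bP': "b \<in> P0 - (\<Union>i\<in>{1..h}. interior (Q i))" and tP': "t \<in> P0 - (\<Union>i\<in>{1..h}. interior (Q i))"
        using sP tP aP bP by (auto simp: P_def)
      obtain ps1 where ps1: "ps1 \<noteq> []" "hd ps1 = s" "last ps1 = a"
          "segs (P0 - (\<Union>i\<in>{1..h}. interior (Q i))) ps1" "plen ps1 \<le> 40 / lam * dist s a"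
        using less.IH[OF ca] sP' aP' by (auto simp: Ia_def)
      obtain ps3 where ps3: "ps3 \<noteq> []" "hd ps3 = b" "last ps3 = t"
          "segs (P0 - (\<Union>i\<in>{1..h}. interior (Q i))) ps3" "plen ps3 \<le> 40 / lam * dist b t"
        using less.IH[OF cb] bP' tP' by (auto simp: Ib_def)
      obtain ps2 where ps2: "ps2 \<noteq> []" "hd ps2 = a" "last ps2 = b"
          "segs (frontier (Q i)) ps2" "plen ps2 \<le> 40 / lam * dist a b"
        using boundary_path[of "Q i" a b lam] Qs i aF bF lam by auto
      have ps2': "segs (P0 - (\<Union>i\<in>{1..h}. interior (Q i))) ps2"
        using segs_mono[OF ps2(4) frP[OF i]] by (simp add: P_def)
      define ps12 where "ps12 = ps1 @ tl ps2"
      have c12: "segs (P0 - (\<Union>i\<in>{1..h}. interior (Q i))) ps12 \<and> plen ps12 = plen ps1 + plen ps2"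
        unfolding ps12_def by (rule segs_app[OF ps1(1) ps2(1) _ ps1(4) ps2']) (simp add: ps1(3) ps2(2))
      have ne12: "ps12 \<noteq> []" "hd ps12 = s" "last ps12 = b"
      proof -
        show "ps12 \<noteq> []" using ps1(1) by (simp add: ps12_def)
        show "hd ps12 = s" using ps1(1,2) by (simp add: ps12_def)
        show "last ps12 = b" unfolding ps12_def
          using last_app_tl[OF ps1(1) ps2(1)] ps1(3) ps2(2,3) by simp
      qed
      have c123: "segs (P0 - (\<Union>i\<in>{1..h}. interior (Q i))) (ps12 @ tl ps3) \<and> plen (ps12 @ tl ps3) = plen ps12 + plen ps3"
        by (rule segs_app[OF ne12(1) ps3(1) _ conjunct1[OF c12] ps3(4)]) (simp add: ne12(3) ps3(2))
      have ne123: "ps12 @ tl ps3 \<noteq> []" "hd (ps12 @ tl ps3) = s" "last (ps12 @ tl ps3) = t"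
      proof -
        show "ps12 @ tl ps3 \<noteq> []" using ne12(1) by simp
        show "hd (ps12 @ tl ps3) = s" using ne12(1,2) by simp
        show "last (ps12 @ tl ps3) = t" using last_app_tl[OF ne12(1) ps3(1)] ne12(3) ps3(2,3) by simp
      qed
      have pd: "dist (p x) (p y) = \<bar>x - y\<bar> * dist s t" for x y
        unfolding p_def by (rule p_dist)
      have p0: "p 0 = s" and p1: "p 1 = t" by (simp_all add: p_def)
      have d1: "dist s a = ta * dist s t" using pd[of 0 ta] ta01 by (simp add: p0 a_def)
      have d2: "dist a b = (tb - ta) * dist s t" using pd[of ta tb] tab by (simp add: a_def b_def dist_commute)
      have d3: "dist b t = (1 - tb) * dist s t" using pd[of tb 1] tb01 by (simp add: p1 b_def)
      have dsum: "dist s a + dist a b + dist b t = dist s t"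
        unfolding d1 d2 d3 by (simp add: algebra_simps)
      have pl: "plen (ps12 @ tl ps3) = plen ps1 + plen ps2 + plen ps3" using c123 c12 by simp
      have "plen (ps12 @ tl ps3) \<le> 40 / lam * dist s a + 40 / lam * dist a b + 40 / lam * dist b t"
        unfolding pl by (intro add_mono ps1(5) ps2(5) ps3(5))
      also have "\<dots> = 40 / lam * (dist s a + dist a b + dist b t)" by (simp only: distrib_left)
      also have "\<dots> = 40 / lam * dist s t" by (simp only: dsum)
      finally show ?thesis using c123 ne123 by blast
    qed
  qed
qed



theorem corollary2:
  "\<exists>C>0. \<forall>(lam::real) (h::nat) (P0::(real^2) set) (Q::nat \<Rightarrow> (real^2) set) s t.
     0 < lam \<and> lam \<le> 1 \<and> convex_polygon P0 \<and>
     (\<forall>i\<in>{1..h}. convex_polygon (Q i) \<and> fat lam (Q i) \<and> Q i \<subseteq> interior P0) \<and>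
     (\<forall>i\<in>{1..h}. \<forall>j\<in>{1..h}. i \<noteq> j \<longrightarrow> Q i \<inter> Q j = {}) \<and>
     s \<in> P0 - (\<Union>i\<in>{1..h}. interior (Q i)) \<and> t \<in> P0 - (\<Union>i\<in>{1..h}. interior (Q i))
     \<longrightarrow> geod (P0 - (\<Union>i\<in>{1..h}. interior (Q i))) s t \<le> ereal (C / lam * dist s t)"
proof (rule exI[of _ 40], intro conjI allI impI)
  show "(0::real) < 40" by simp
next
  fix lam :: real and h :: nat and P0 :: "(real^2) set" and Q :: "nat \<Rightarrow> (real^2) set" and s t
  assume H: "0 < lam \<and> lam \<le> 1 \<and> convex_polygon P0 \<and>
     (\<forall>i\<in>{1..h}. convex_polygon (Q i) \<and> fat lam (Q i) \<and> Q i \<subseteq> interior P0) \<and>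
     (\<forall>i\<in>{1..h}. \<forall>j\<in>{1..h}. i \<noteq> j \<longrightarrow> Q i \<inter> Q j = {}) \<and>
     s \<in> P0 - (\<Union>i\<in>{1..h}. interior (Q i)) \<and> t \<in> P0 - (\<Union>i\<in>{1..h}. interior (Q i))"
  have lam: "0 < lam" "lam \<le> 1" and P0: "convex_polygon P0"
    and Qs: "\<forall>i\<in>{1..h}. convex_polygon (Q i) \<and> fat lam (Q i) \<and> Q i \<subseteq> interior P0"
    and disj: "\<forall>i\<in>{1..h}. \<forall>j\<in>{1..h}. i \<noteq> j \<longrightarrow> Q i \<inter> Q j = {}"
    and sP: "s \<in> P0 - (\<Union>i\<in>{1..h}. interior (Q i))" and tP: "t \<in> P0 - (\<Union>i\<in>{1..h}. interior (Q i))"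
    using H by auto
  obtain ps where ps: "ps \<noteq> []" "hd ps = s" "last ps = t" "segs (P0 - (\<Union>i\<in>{1..h}. interior (Q i))) ps"
      "plen ps \<le> 40 / lam * dist s t"
    using main_lemma[OF lam P0 Qs disj, of "card {i\<in>{1..h}. closed_segment s t \<inter> interior (Q i) \<noteq> {}}"] sP tP
    by blast
  show "geod (P0 - (\<Union>i\<in>{1..h}. interior (Q i))) s t \<le> ereal (40 / lam * dist s t)"
    by (rule geod_le[OF ps(1) ps(4) ps(2) sP ps(3) ps(5)])
qed

end
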